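(* Let $B\subset\mathbb C$ be a Bernstein set. Then there exists a perfectly everywhere surjective function $f:\mathbb C\to\mathbb C$ such that $f(x)=1$ for every $x\in\mathbb C\setminus B$.
   Context: A perfect subset of $\mathbb C$ is a nonempty closed set with no isolated points. A set $B\subset\mathbb C$ is a Bernstein set if both $B$ and $\mathbb C\setminus B$ meet every perfect subset of $\mathbb C$. A function $f:\mathbb C\to\mathbb C$ is perfectly everywhere surjective if $f(P)=\mathbb C$ for every perfect set $P\subset\mathbb C$. *)

theory Defs
  imports "HOL-Analysis.Analysis"
begin

definition perfect_set :: "complex set \<Rightarrow> bool" where
  "perfect_set P \<longleftrightarrow> P \<noteq> {} \<and> closed P \<and> (\<forall>x\<in>P. x islimpt P)"

definition bernstein_set :: "complex set \<Rightarrow> bool" where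
  "bernstein_set B \<longleftrightarrow>
     (\<forall>P. perfect_set P \<longrightarrow> B \<inter> P \<noteq> {} \<and> (UNIV - B) \<inter> P \<noteq> {})"

definition perfectly_everywhere_surjective :: "(complex \<Rightarrow> complex) \<Rightarrow> bool" where
  "perfectly_everywhere_surjective f \<longleftrightarrow> (\<forall>P. perfect_set P \<longrightarrow> f ` P = UNIV)"

end

theory Submission
  imports Defs
begin


lemma cball_disj:
  fixes a b :: complex
  assumes "\<rho> < dist a b / 2"
  shows "cball a \<rho> \<inter> cball b \<rho> = {}"
proof -
  { fix x assume "dist a x \<le> \<rho>" "dist b x \<le> \<rho>"
    hence "dist a b \<le> 2*\<rho>" by (metis dist_commute dist_triangle order_trans add_mono mult_2)
    with assms have False by simp }
  thus ?thesis by auto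
qed

lemma children:
  assumes "perfect_set P" "c \<in> P" "r > 0"
  shows "\<exists>ch::bool\<times>bool \<Rightarrow> complex\<times>real. \<forall>k. fst (ch k) \<in> P \<and> 0 < snd (ch k) \<and> snd (ch k) \<le> r/2
     \<and> cball (fst (ch k)) (snd (ch k)) \<subseteq> ball c r
     \<and> (\<forall>k'. k' \<noteq> k \<longrightarrow> cball (fst (ch k)) (snd (ch k)) \<inter> cball (fst (ch k')) (snd (ch k')) = {})"
proof -
  have "c islimpt P" using assms unfolding perfect_set_def by blast
  hence "infinite (P \<inter> ball c r)" using assms(3) islimpt_eq_infinite_ball by blast
  then obtain f :: "nat \<Rightarrow> complex" where f: "inj f" "range f \<subseteq> P \<inter> ball c r"
    using infinite_countable_subset by blast
  define enc :: "bool\<times>bool \<Rightarrow> nat" where "enc k = (if fst k then 2 else 0) + (if snd k then 1 else 0)" for k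
  have "inj enc" unfolding inj_def enc_def by auto
  define p where "p k = f (enc k)" for k
  have pinj: "p k \<noteq> p k'" if "k \<noteq> k'" for k k'
    using that f(1) \<open>inj enc\<close> unfolding p_def inj_def by blast
  have pP: "p k \<in> P" "dist c (p k) < r" for k using f(2) unfolding p_def by (auto dest!: subsetD[of _ _ "f (enc k)"])
  have ev1: "\<forall>\<^sub>F \<rho> in at_right (0::real). 0 < \<rho> \<and> \<rho> \<le> r/2" 
    using assms(3) by (auto simp: eventually_at_right_field intro!: exI[of _ "r/2"])
  have ev2: "\<forall>\<^sub>F \<rho> in at_right (0::real). \<forall>k. \<rho> < r - dist c (p k)"
  proof (rule eventually_all_finite)
    fix k
    have "r - dist c (p k) > 0" using pP(2)[of k] by simp
    thus "\<forall>\<^sub>F \<rho> in at_right (0::real). \<rho> < r - dist c (p k)"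
      by (auto simp: eventually_at_right_field intro!: exI[of _ "r - dist c (p k)"])
  qed
  have ev3: "\<forall>\<^sub>F \<rho> in at_right (0::real). \<forall>k k'. k \<noteq> k' \<longrightarrow> \<rho> < dist (p k) (p k') / 2"
  proof (rule eventually_all_finite, rule eventually_all_finite)
    fix k k'
    show "\<forall>\<^sub>F \<rho> in at_right (0::real). k \<noteq> k' \<longrightarrow> \<rho> < dist (p k) (p k') / 2"
    proof (cases "k = k'")
      case False
      hence "dist (p k) (p k') > 0" using pinj by simp
      thus ?thesis by (auto simp: eventually_at_right_field intro!: exI[of _ "dist (p k) (p k') / 2"])
    qed simp
  qed
  have "\<forall>\<^sub>F \<rho> in at_right (0::real). (0 < \<rho> \<and> \<rho> \<le> r/2) \<and> (\<forall>k. \<rho> < r - dist c (p k)) \<and> (\<forall>k k'. k \<noteq> k' \<longrightarrow> \<rho> < dist (p k) (p k') / 2)"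
    using ev1 ev2 ev3 by eventually_elim auto
  from eventually_happens[OF this] obtain \<rho> where rho: "0 < \<rho>" "\<rho> \<le> r/2" "\<And>k. \<rho> < r - dist c (p k)" "\<And>k k'. k \<noteq> k' \<Longrightarrow> \<rho> < dist (p k) (p k') / 2"
    using trivial_limit_at_right_real[of 0] by (metis trivial_limit_def)
  have sub: "cball (p k) \<rho> \<subseteq> ball c r" for k
  proof
    fix x assume "x \<in> cball (p k) \<rho>"
    hence "dist (p k) x \<le> \<rho>" by simp
    moreover have "dist c x \<le> dist c (p k) + dist (p k) x" by (rule dist_triangle)
    ultimately show "x \<in> ball c r" using rho(3)[of k] by simp
  qed
  show ?thesis
    apply (rule exI[of _ "\<lambda>k. (p k, \<rho>)"])
    using pP rho sub cball_disj by auto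
qed

definition good_ch :: "complex set \<Rightarrow> complex \<Rightarrow> real \<Rightarrow> (bool\<times>bool \<Rightarrow> complex\<times>real) \<Rightarrow> bool" where
  "good_ch P c r ch \<longleftrightarrow> (\<forall>k. fst (ch k) \<in> P \<and> 0 < snd (ch k) \<and> snd (ch k) \<le> r/2
     \<and> cball (fst (ch k)) (snd (ch k)) \<subseteq> ball c r
     \<and> (\<forall>k'. k' \<noteq> k \<longrightarrow> cball (fst (ch k)) (snd (ch k)) \<inter> cball (fst (ch k')) (snd (ch k')) = {}))"

locale scheme =
  fixes P :: "complex set" and p0 :: complex
  assumes perf: "perfect_set P" and p0: "p0 \<in> P"
begin

definition chs :: "complex \<Rightarrow> real \<Rightarrow> bool\<times>bool \<Rightarrow> complex\<times>real" where
  "chs c r = (SOME ch. good_ch P c r ch)"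

lemma chs_good: "c \<in> P \<Longrightarrow> r > 0 \<Longrightarrow> good_ch P c r (chs c r)"
proof -
  assume "c \<in> P" "r > 0"
  hence "\<exists>ch. good_ch P c r ch" using children[OF perf] unfolding good_ch_def by blast
  thus ?thesis unfolding chs_def by (rule someI_ex)
qed

lemma good_chD: assumes "good_ch P c r ch"
  shows "fst (ch k) \<in> P" "0 < snd (ch k)" "snd (ch k) \<le> r/2"
     "cball (fst (ch k)) (snd (ch k)) \<subseteq> ball c r"
     "k' \<noteq> k \<Longrightarrow> cball (fst (ch k)) (snd (ch k)) \<inter> cball (fst (ch k')) (snd (ch k')) = {}"
  using assms unfolding good_ch_def by blast+

definition nd :: "(bool\<times>bool) list \<Rightarrow> complex\<times>real" where
  "nd t = fold (\<lambda>a q. chs (fst q) (snd q) a) t (p0, 1)"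

definition C :: "(bool\<times>bool) list \<Rightarrow> complex set" where
  "C t = cball (fst (nd t)) (snd (nd t))"

lemma nd_snoc: "nd (t @ [a]) = chs (fst (nd t)) (snd (nd t)) a"
  unfolding nd_def by simp

lemma nd_inv: "fst (nd t) \<in> P \<and> 0 < snd (nd t) \<and> snd (nd t) \<le> (1/2)^length t"
proof (induction t rule: rev_induct)
  case Nil thus ?case using p0 by (simp add: nd_def)
next
  case (snoc a t)
  hence g: "good_ch P (fst (nd t)) (snd (nd t)) (chs (fst (nd t)) (snd (nd t)))" using chs_good by blast
  have "snd (nd t) / 2 \<le> (1/2)^length (t@[a])" using snoc by simp
  thus ?case using good_chD[OF g, of a] unfolding nd_snoc by simp
qed

lemma C_child: "C (t @ [a]) \<subseteq> C t"
proof -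
  have "good_ch P (fst (nd t)) (snd (nd t)) (chs (fst (nd t)) (snd (nd t)))" using chs_good nd_inv by blast
  hence "C (t @ [a]) \<subseteq> ball (fst (nd t)) (snd (nd t))" unfolding C_def nd_snoc by (rule good_chD)
  thus ?thesis unfolding C_def using ball_subset_cball by blast
qed

lemma C_child_disj: "a \<noteq> b \<Longrightarrow> C (t @ [a]) \<inter> C (t @ [b]) = {}"
proof -
  assume "a \<noteq> b"
  have "good_ch P (fst (nd t)) (snd (nd t)) (chs (fst (nd t)) (snd (nd t)))" using chs_good nd_inv by blast
  from good_chD(5)[OF this, of b a] \<open>a \<noteq> b\<close> show ?thesis unfolding C_def nd_snoc by simp
qed

lemma C_nest: "C (t @ u) \<subseteq> C t"
proof (induction u rule: rev_induct)
  case Nil thus ?case by simp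
next
  case (snoc a u) thus ?case using C_child[of "t @ u" a] by simp
qed

lemma C_disj: "length t = length t' \<Longrightarrow> t \<noteq> t' \<Longrightarrow> C t \<inter> C t' = {}"
proof (induction t arbitrary: t' rule: rev_induct)
  case Nil thus ?case by simp
next
  case (snoc a u t')
  obtain u' a' where t': "t' = u' @ [a']"
    using snoc.prems(1) by (cases t' rule: rev_exhaust) auto
  have lu: "length u' = length u" using snoc.prems(1) unfolding t' by simp
  show ?case
  proof (cases "u = u'")
    case True
    hence "a \<noteq> a'" using snoc.prems(2) unfolding t' by blast
    thus ?thesis using C_child_disj unfolding t' True by blast
  next
    case False
    hence "C u \<inter> C u' = {}" using snoc.IH lu by metis
    moreover have "C (u @ [a]) \<subseteq> C u" "C (u' @ [a']) \<subseteq> C u'" by (rule C_child)+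
    ultimately show ?thesis unfolding t' by blast
  qed
qed

lemma C_nonempty: "fst (nd t) \<in> C t"
  unfolding C_def using nd_inv[of t] by simp

lemma C_dist: "x \<in> C t \<Longrightarrow> y \<in> C t \<Longrightarrow> dist x y \<le> 2 * (1/2)^length t"
proof -
  assume "x \<in> C t" "y \<in> C t"
  hence "dist (fst (nd t)) x \<le> snd (nd t)" "dist (fst (nd t)) y \<le> snd (nd t)" unfolding C_def by auto
  moreover have "dist x y \<le> dist (fst (nd t)) x + dist (fst (nd t)) y" by (metis dist_commute dist_triangle)
  moreover have "snd (nd t) \<le> (1/2)^length t" using nd_inv[of t] by blast
  ultimately show ?thesis by argo
qed


lemma small_pow: "e > 0 \<Longrightarrow> \<exists>n. 2 * (1/2::real)^n < e"
  using real_arch_pow_inv[of "e/2" "1/2::real"] by (auto simp: field_simps)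

definition cp :: "nat set \<Rightarrow> (bool\<times>bool) list \<Rightarrow> bool" where
  "cp s t \<longleftrightarrow> (\<forall>i<length t. fst (t!i) = (i\<in>s))"

definition Q :: "nat set \<Rightarrow> complex set" where
  "Q s = (\<Inter>n. \<Union>{C t | t. length t = n \<and> cp s t})"

lemma cp_take: "cp s t \<Longrightarrow> cp s (take n t)"
  unfolding cp_def by auto

lemma cp_snoc: "cp s t \<Longrightarrow> cp s (t @ [(length t \<in> s, b)])"
  unfolding cp_def by (auto simp: nth_append less_Suc_eq)

lemma QI: "(\<And>n. \<exists>t. length t = n \<and> cp s t \<and> z \<in> C t) \<Longrightarrow> z \<in> Q s"
  unfolding Q_def by blast

lemma QD: "z \<in> Q s \<Longrightarrow> \<exists>t. length t = n \<and> cp s t \<and> z \<in> C t"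
  unfolding Q_def by blast

lemma Q_closed: "closed (Q s)"
proof -
  have "finite {C t | t. length t = n \<and> cp s t}" for n
  proof -
    have "finite {t::(bool\<times>bool) list. set t \<subseteq> UNIV \<and> length t = n}" by (rule finite_lists_length_eq) simp
    hence "finite {t. length t = n \<and> cp s t}" by (rule rev_finite_subset) auto
    hence "finite (C ` {t. length t = n \<and> cp s t})" by simp
    moreover have "{C t | t. length t = n \<and> cp s t} = C ` {t. length t = n \<and> cp s t}" by auto
    ultimately show ?thesis by simp
  qed
  moreover have "closed (C t)" for t unfolding C_def by simp
  ultimately show ?thesis unfolding Q_def by (intro closed_INT ballI closed_Union) auto
qed

lemma Q_sub: "Q s \<subseteq> P"
proof
  fix z assume z: "z \<in> Q s"
  have "z \<in> closure P"
    unfolding closure_approachable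
  proof (intro allI impI)
    fix e :: real assume "e > 0"
    then obtain n where n: "2 * (1/2::real)^n < e" using small_pow by blast
    obtain t where t: "length t = n" "z \<in> C t" using QD[OF z] by blast
    have "dist (fst (nd t)) z \<le> 2 * (1/2)^length t" using C_dist[OF C_nonempty t(2)] .
    thus "\<exists>y\<in>P. dist y z < e" using n t(1) nd_inv[of t] by (intro bexI[of _ "fst (nd t)"]) auto
  qed
  thus "z \<in> P" using perf unfolding perfect_set_def by (simp add: closure_closed)
qed

lemma Q_ext:
  assumes "cp s t" shows "\<exists>z\<in>Q s. z \<in> C t"
proof -
  define L where "L k = t @ map (\<lambda>i. (i \<in> s, False)) [length t..<length t + k]" for k
  have L0: "L 0 = t" unfolding L_def by simp
  have LS: "L (Suc k) = L k @ [(length (L k) \<in> s, False)]" for k unfolding L_def by simp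
  have lenL: "length (L k) = length t + k" for k unfolding L_def by simp
  have cpL: "cp s (L k)" for k
    by (induction k) (use assms L0 LS cp_snoc in auto)
  have dec: "C (L n) \<subseteq> C (L m)" if "m \<le> n" for m n
    using that
  proof (induction n)
    case 0 thus ?case by simp
  next
    case (Suc n)
    show ?case
    proof (cases "m = Suc n")
      case False
      hence "C (L n) \<subseteq> C (L m)" using Suc by simp
      thus ?thesis using C_child[of "L n"] LS[of n] by (metis subset_trans)
    qed simp
  qed
  have cl: "closed (C (L k))" for k unfolding C_def by simp
  have ne: "C (L k) \<noteq> {}" for k using C_nonempty by blast
  have sm: "\<exists>n. \<forall>x\<in>C (L n). \<forall>y\<in>C (L n). dist x y < e" if epos: "e > 0" for e :: real
  proof -
    obtain n where n: "2 * (1/2::real)^n < e" using small_pow epos by blast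
    have "(1/2::real)^(length t + n) \<le> (1/2)^n" by (rule power_decreasing) auto
    have "\<forall>x\<in>C (L n). \<forall>y\<in>C (L n). dist x y < e"
    proof (intro ballI)
      fix x y assume "x \<in> C (L n)" "y \<in> C (L n)"
      hence "dist x y \<le> 2 * (1 / 2) ^ (length t + n)" using C_dist[of x "L n" y] lenL[of n] by simp
      thus "dist x y < e" using n \<open>(1/2::real)^(length t + n) \<le> (1/2)^n\<close> by linarith
    qed
    thus "\<exists>n. \<forall>x\<in>C (L n). \<forall>y\<in>C (L n). dist x y < e" by blast
  qed
  obtain z where z: "\<And>k. z \<in> C (L k)"
    using decreasing_closed_nest[of "\<lambda>k. C (L k)", OF cl ne dec sm] by blast
  have "z \<in> Q s"
  proof (rule QI)
    fix n
    show "\<exists>t'. length t' = n \<and> cp s t' \<and> z \<in> C t'"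
    proof (cases "length t \<le> n")
      case True
      thus ?thesis using z[of "n - length t"] cpL[of "n - length t"] lenL[of "n - length t"] by auto
    next
      case False
      have "C t \<subseteq> C (take n t)" using C_nest[of "take n t" "drop n t"] by simp
      thus ?thesis using z[of 0] L0 False cp_take[OF assms, of n] by (intro exI[of _ "take n t"]) auto
    qed
  qed
  thus ?thesis using z[of 0] L0 by auto
qed

lemma Q_perfect: "perfect_set (Q s)"
  unfolding perfect_set_def
proof (intro conjI ballI)
  show "Q s \<noteq> {}" using Q_ext[of s "[]"] by (auto simp: cp_def)
  show "closed (Q s)" by (rule Q_closed)
  fix z assume z: "z \<in> Q s"
  show "z islimpt Q s"
    unfolding islimpt_approachable
  proof (intro allI impI)
    fix e :: real assume "e > 0"
    then obtain n where n: "2 * (1/2::real)^n < e" using small_pow by blast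
    obtain t where t: "length t = n" "cp s t" "z \<in> C t" using QD[OF z] by blast
    obtain z1 where z1: "z1 \<in> Q s" "z1 \<in> C (t @ [(n \<in> s, False)])"
      using Q_ext[OF cp_snoc[OF t(2)]] t(1) by auto
    obtain z2 where z2: "z2 \<in> Q s" "z2 \<in> C (t @ [(n \<in> s, True)])"
      using Q_ext[OF cp_snoc[OF t(2)]] t(1) by auto
    have "z1 \<noteq> z2" using C_child_disj[of "(n \<in> s, False)" "(n \<in> s, True)" t] z1 z2 by auto
    moreover have "z1 \<in> C t" "z2 \<in> C t" using z1 z2 C_child by blast+
    hence "dist z1 z < e" "dist z2 z < e" using C_dist[of _ t] t n by (smt (verit))+
    ultimately show "\<exists>x'\<in>Q s. x' \<noteq> z \<and> dist x' z < e" using z1 z2 by metis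
  qed
qed

lemma Q_disj: "s \<noteq> s' \<Longrightarrow> Q s \<inter> Q s' = {}"
proof -
  assume "s \<noteq> s'"
  then obtain m where m: "(m \<in> s) \<noteq> (m \<in> s')" by blast
  show ?thesis
  proof (rule ccontr)
    assume "Q s \<inter> Q s' \<noteq> {}"
    then obtain z where "z \<in> Q s" "z \<in> Q s'" by blast
    then obtain t t' where t: "length t = Suc m" "cp s t" "z \<in> C t"
      and t': "length t' = Suc m" "cp s' t'" "z \<in> C t'" using QD by metis
    have "fst (t!m) \<noteq> fst (t'!m)" using t t' m unfolding cp_def by auto
    hence "t \<noteq> t'" by auto
    thus False using C_disj[of t t'] t t' by auto
  qed
qed

end

lemma perfect_many:
  assumes "perfect_set P"
  shows "\<exists>Q::nat set \<Rightarrow> complex set. (\<forall>s. perfect_set (Q s) \<and> Q s \<subseteq> P) \<and> (\<forall>s s'. s \<noteq> s' \<longrightarrow> Q s \<inter> Q s' = {})"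
proof -
  obtain p0 where "p0 \<in> P" using assms unfolding perfect_set_def by blast
  then interpret scheme P p0 using assms by unfold_locales
  show ?thesis using Q_perfect Q_sub Q_disj by blast
qed


unbundle cardinal_syntax

lemma bern_large:
  assumes "bernstein_set B" "perfect_set P"
  shows "|UNIV :: nat set set| \<le>o |B \<inter> P|"
proof -
  obtain Q :: "nat set \<Rightarrow> complex set" where Qa: "\<forall>s. perfect_set (Q s) \<and> Q s \<subseteq> P"
    and Qb: "\<forall>s s'. s \<noteq> s' \<longrightarrow> Q s \<inter> Q s' = {}"
    using perfect_many[OF assms(2)] by (elim exE conjE) (rule that)
  have Q: "\<And>s. perfect_set (Q s)" "\<And>s. Q s \<subseteq> P" "\<And>s s'. s \<noteq> s' \<Longrightarrow> Q s \<inter> Q s' = {}"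
    using Qa Qb by auto
  define h where "h s = (SOME x. x \<in> B \<inter> Q s)" for s
  have h: "h s \<in> B \<inter> Q s" for s
  proof -
    have "B \<inter> Q s \<noteq> {}" using assms(1) Q(1)[of s] unfolding bernstein_set_def by blast
    hence "\<exists>x. x \<in> B \<inter> Q s" by blast
    thus ?thesis unfolding h_def by (rule someI_ex)
  qed
  have "inj h"
  proof (rule injI)
    fix s s' assume hs: "h s = h s'"
    show "s = s'"
    proof (rule ccontr)
      assume "s \<noteq> s'"
      hence "Q s \<inter> Q s' = {}" by (rule Q(3))
      moreover have "h s \<in> Q s" "h s' \<in> Q s'" using h[of s] h[of s'] by auto
      moreover have "h s \<in> Q s'" using hs \<open>h s' \<in> Q s'\<close> by simp
      ultimately show False by blast
    qed
  qed
  moreover have "h ` UNIV \<subseteq> B \<inter> P"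
  proof
    fix x assume "x \<in> h ` UNIV"
    then obtain s where "x = h s" by blast
    thus "x \<in> B \<inter> P" using h[of s] Q(2)[of s] by auto
  qed
  ultimately have "inj_on h UNIV \<and> h ` UNIV \<subseteq> B \<inter> P" by simp
  thus ?thesis using card_of_ordLeq[of "UNIV :: nat set set" "B \<inter> P"] by (intro iffD1[OF card_of_ordLeq] exI)
qed

lemma closed_enc:
  "\<exists>e :: complex set \<Rightarrow> nat set. \<forall>C1 C2. closed C1 \<longrightarrow> closed C2 \<longrightarrow> e C1 = e C2 \<longrightarrow> C1 = C2"
proof -
  obtain Bs :: "nat \<Rightarrow> complex set" where "inj Bs" "\<And>n. open (Bs n)" and Bs: "\<And>S. open S \<Longrightarrow> \<exists>k. S = \<Union>{Bs n |n. n \<in> k}"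
    by (rule univ_second_countable_sequence) blast+
  define e where "e C = {n. Bs n \<subseteq> - C}" for C
  have rep: "- C = \<Union>{Bs n |n. n \<in> e C}" if "closed C" for C
  proof -
    have "open (- C)" using that by (simp add: open_Compl)
    then obtain k where k: "- C = \<Union>{Bs n |n. n \<in> k}" using Bs by blast
    have "k \<subseteq> e C" unfolding e_def using k by blast
    show ?thesis
    proof
      show "- C \<subseteq> \<Union>{Bs n |n. n \<in> e C}" using k \<open>k \<subseteq> e C\<close> by blast
      show "\<Union>{Bs n |n. n \<in> e C} \<subseteq> - C" unfolding e_def by blast
    qed
  qed
  show ?thesis
  proof (intro exI allI impI)
    fix C1 C2 :: "complex set" assume "closed C1" "closed C2" "e C1 = e C2"
    hence "- C1 = - C2" using rep[of C1] rep[of C2] by simp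
    thus "C1 = C2" by simp
  qed
qed

lemma I_small:
  "|{P. perfect_set P} \<times> (UNIV::complex set)| \<le>o |UNIV :: nat set set|"
proof -
  obtain e :: "complex set \<Rightarrow> nat set" where e: "\<And>C1 C2. closed C1 \<Longrightarrow> closed C2 \<Longrightarrow> e C1 = e C2 \<Longrightarrow> C1 = C2"
    using closed_enc by metis
  define F where "F p = (\<lambda>n. 2*n) ` e (fst p) \<union> (\<lambda>n. 2*n+1) ` e {snd p}" for p :: "complex set \<times> complex"
  have ev: "(\<lambda>n::nat. 2*n) ` A = {m. even m \<and> m div 2 \<in> A}" for A by (auto elim!: evenE)
  have od: "(\<lambda>n::nat. 2*n+1) ` A = {m. odd m \<and> m div 2 \<in> A}" for A by (auto elim!: oddE)
  have Fsplit: "e (fst p) = {n. 2*n \<in> F p}" "e {snd p} = {n. 2*n+1 \<in> F p}" for p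
    unfolding F_def ev od by auto
  have "inj_on F ({P. perfect_set P} \<times> UNIV)"
  proof (rule inj_onI)
    fix p q assume p: "p \<in> {P. perfect_set P} \<times> (UNIV::complex set)" and q: "q \<in> {P. perfect_set P} \<times> (UNIV::complex set)" and "F p = F q"
    hence "e (fst p) = e (fst q)" "e {snd p} = e {snd q}" using Fsplit by metis+
    moreover have "closed (fst p)" "closed (fst q)" using p q unfolding perfect_set_def by auto
    ultimately have "fst p = fst q" "{snd p} = {snd q}" using e by (metis closed_singleton)+
    thus "p = q" by (simp add: prod_eq_iff)
  qed
  thus ?thesis using card_of_ordLeq[of _ "UNIV :: nat set set"] by blast
qed

theorem proposition3p3:
  fixes B :: "complex set"
  assumes "bernstein_set B"
  shows "\<exists>f. perfectly_everywhere_surjective f \<and> (\<forall>x \<in> UNIV - B. f x = 1)"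
proof -
  define I where "I = {P. perfect_set P} \<times> (UNIV::complex set)"
  define r where "r = |I|"
  have CO: "Card_order r" unfolding r_def by (rule card_of_Card_order)
  have WO: "Well_order r" unfolding r_def by (rule card_of_Well_order)
  have FI: "Field r = I" unfolding r_def by (rule Field_card_of)
  have WR: "wo_rel r" using WO by (simp add: wo_rel_def)
  define H where "H g i = (SOME x. x \<in> B \<inter> fst i - g ` underS r i)" for g :: "complex set \<times> complex \<Rightarrow> complex" and i
  have adm: "wo_rel.adm_wo r H" unfolding wo_rel.adm_wo_def[OF WR] H_def
    by (intro allI impI arg_cong[where f = Eps] ext) (auto simp: image_def)
  define g where "g = wo_rel.worec r H"
  have gfix: "g i = H g i" for i unfolding g_def using wo_rel.worec_fixpoint[OF WR adm] by metis
  have big: "B \<inter> fst i - g ` underS r i \<noteq> {}" if i: "i \<in> I" for i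
  proof
    assume emp: "B \<inter> fst i - g ` underS r i = {}"
    have "perfect_set (fst i)" using i unfolding I_def by auto
    hence "|UNIV :: nat set set| \<le>o |B \<inter> fst i|" using bern_large assms by blast
    hence A: "r \<le>o |B \<inter> fst i|" using I_small unfolding r_def I_def using ordLeq_transitive by blast
    have "|B \<inter> fst i| \<le>o |g ` underS r i|" using emp by (intro card_of_mono1) blast
    also have "|g ` underS r i| \<le>o |underS r i|" by (rule card_of_image)
    finally have "|B \<inter> fst i| \<le>o |underS r i|" .
    moreover have "|underS r i| <o r" using card_of_underS[OF CO] i FI by blast
    ultimately have "|B \<inter> fst i| <o r" using ordLeq_ordLess_trans by blast
    thus False using A not_ordLess_ordLeq by blast
  qed
  have gi: "g i \<in> B \<inter> fst i - g ` underS r i" if "i \<in> I" for i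
    using big[OF that] gfix[of i] unfolding H_def by (metis ex_in_conv someI_ex)
  have inj: "inj_on g I"
  proof (rule inj_onI)
    fix i j assume ij: "i \<in> I" "j \<in> I" "g i = g j"
    show "i = j"
    proof (rule ccontr)
      assume ne: "i \<noteq> j"
      have "(i, j) \<in> r \<or> (j, i) \<in> r" using ij FI wo_rel.TOTAL[OF WR] ne unfolding total_on_def by blast
      hence "i \<in> underS r j \<or> j \<in> underS r i" using ne unfolding underS_def by auto
      thus False
      proof
        assume "i \<in> underS r j"
        hence "g j \<in> g ` underS r j" using ij(3) by (metis image_eqI)
        thus False using gi[OF ij(2)] by blast
      next
        assume "j \<in> underS r i"
        hence "g i \<in> g ` underS r i" using ij(3) by (metis image_eqI)
        thus False using gi[OF ij(1)] by blast
      qed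
    qed
  qed
  define f where "f x = (if x \<in> g ` I then snd (inv_into I g x) else 1)" for x
  have "perfectly_everywhere_surjective f"
    unfolding perfectly_everywhere_surjective_def
  proof (intro allI impI)
    fix P assume P: "perfect_set P"
    show "f ` P = UNIV"
    proof (intro set_eqI iffI)
      fix y :: complex
      have i: "(P, y) \<in> I" using P unfolding I_def by simp
      have "f (g (P, y)) = y" unfolding f_def using i inv_into_f_f[OF inj i] by simp
      moreover have "g (P, y) \<in> P" using gi[OF i] by simp
      ultimately show "y \<in> f ` P" by (metis image_eqI)
    qed simp
  qed
  moreover have "\<forall>x \<in> UNIV - B. f x = 1"
  proof
    fix x assume "x \<in> UNIV - B"
    hence "x \<notin> g ` I" using gi by blast
    thus "f x = 1" unfolding f_def by simp
  qed
  ultimately show ?thesis by blast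
qed

end
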